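(* Let $\pi$ be a matching of size $n$. For every integer $p$ with $1\le p\le n-1$ we have $m^{(A)}_p(\pi)=m^{(B)}_p(\pi)$.
   Context: A matching of size $n$ is a set of $n$ disjoint pairs (arches) partitioning $\{1,\dots,2n\}$ which is noncrossing: there are no two arches $\{i<j\}$, $\{k<l\}$ with $i<k<j<l$. Encode $\pi$ by the increasing sequence $a_1<\dots<a_n$ of the smaller elements of its arches (positions of opening parentheses); one has $a_i\le 2i-1$. The Young diagram $Y(\pi)$ is the diagram whose rows, from top to bottom, have lengths $a_n-n\ge a_{n-1}-(n-1)\ge\dots\ge a_1-1$ (row number $n+1-i$ from the top has length $a_i-i$). A box in the $x$-th row from the top and $y$-th column from the left is written $(x,y)$. Rule A: write $\widehat{x}=2n+1-x$. For $1\le p\le n-1$, let $\mathcal{A}^L_p(\pi)$ be the set of arches $\{a_1<a_2\}$ of $\pi$ with $a_1\le p$ and $p<a_2<\widehat p$, and $\mathcal{A}^R_p(\pi)$ the set of arches $\{a_1<a_2\}$ with $p<a_1<\widehat p$ and $\widehat p\le a_2$. Then $|\mathcal{A}^L_p(\pi)|+|\mathcal{A}^R_p(\pi)|$ is even and $m^{(A)}_p(\pi):=\tfrac12(|\mathcal{A}^L_p(\pi)|+|\mathcal{A}^R_p(\pi)|)$. Rule B: label the box $(x,y)$ of $Y(\pi)$ by $n+1-x-y$. The rim of a nonempty Young diagram is the set of its boxes $(x,y)$ such that $(x+1,y+1)$ is not in the diagram; removing the rim leaves a Young diagram, and iterating gives the rim decomposition $R_1,\dots,R_s$ of $Y(\pi)$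 (each $R_\ell$ is the rim of the diagram remaining after removing $R_1,\dots,R_{\ell-1}$). For a rim $R_\ell$, let $i$ be the label of its bottom-left box (the box of $R_\ell$ in its leftmost column), $j$ the label of its top-right box (the box of $R_\ell$ in its topmost row), and $k$ the minimal label in $R_\ell$. Let $B_\ell$ be the multiset $\{k\}\cup\{i,i-1,\dots,k+1\}\cup\{j,j-1,\dots,k+1\}$, and $B_\pi$ the multiset union of all $B_\ell$. Then $m^{(B)}_p(\pi)$ is the multiplicity of $p$ in $B_\pi$. *)

theory Defs
  imports Main "HOL-Library.Multiset"
begin

definition noncrossing_matching :: "nat \<Rightarrow> (nat \<times> nat) set \<Rightarrow> bool" where
  "noncrossing_matching n M \<longleftrightarrow>
     (\<forall>(i,j)\<in>M. i < j \<and> 1 \<le> i \<and> j \<le> 2*n) \<and>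
     (\<forall>x\<in>{1..2*n}. \<exists>!a. a \<in> M \<and> (fst a = x \<or> snd a = x)) \<and>
     (\<forall>(i,j)\<in>M. \<forall>(k,l)\<in>M. \<not> (i < k \<and> k < j \<and> j < l))"

definition hat :: "nat \<Rightarrow> nat \<Rightarrow> nat" where
  "hat n x = 2*n + 1 - x"

definition arcsL :: "nat \<Rightarrow> (nat \<times> nat) set \<Rightarrow> nat \<Rightarrow> (nat \<times> nat) set" where
  "arcsL n M p = {(a1,a2)\<in>M. a1 \<le> p \<and> p < a2 \<and> a2 < hat n p}"

definition arcsR :: "nat \<Rightarrow> (nat \<times> nat) set \<Rightarrow> nat \<Rightarrow> (nat \<times> nat) set" where
  "arcsR n M p = {(a1,a2)\<in>M. p < a1 \<and> a1 < hat n p \<and> hat n p \<le> a2}"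

definition mA :: "nat \<Rightarrow> (nat \<times> nat) set \<Rightarrow> nat \<Rightarrow> nat" where
  "mA n M p = (card (arcsL n M p) + card (arcsR n M p)) div 2"

text \<open>a i = i-th smallest opening position (1-based).\<close>
definition opener :: "(nat \<times> nat) set \<Rightarrow> nat \<Rightarrow> nat" where
  "opener M i = sorted_list_of_set (fst ` M) ! (i - 1)"

text \<open>Young diagram: row x (from top, 1..n) has length a_(n+1-x) - (n+1-x);
  boxes (x,y) = (row, column), 1-based.\<close>
definition young :: "nat \<Rightarrow> (nat \<times> nat) set \<Rightarrow> (nat \<times> nat) set" where
  "young n M = {(x,y). 1 \<le> x \<and> x \<le> n \<and> 1 \<le> y \<and>
                       y \<le> opener M (n + 1 - x) - (n + 1 - x)}"

definition label :: "nat \<Rightarrow> nat \<times> nat \<Rightarrow> int" where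
  "label n b = int n + 1 - int (fst b) - int (snd b)"

definition rim :: "(nat \<times> nat) set \<Rightarrow> (nat \<times> nat) set" where
  "rim D = {(x,y)\<in>D. (x+1, y+1) \<notin> D}"

definition remaining :: "(nat \<times> nat) set \<Rightarrow> nat \<Rightarrow> (nat \<times> nat) set" where
  "remaining D l = ((\<lambda>E. E - rim E) ^^ l) D"

definition bottom_left :: "(nat \<times> nat) set \<Rightarrow> nat \<times> nat" where
  "bottom_left R = (let c = Min (snd ` R) in (Max {x. (x,c) \<in> R}, c))"

definition top_right :: "(nat \<times> nat) set \<Rightarrow> nat \<times> nat" where
  "top_right R = (let r = Min (fst ` R) in (r, Max {y. (r,y) \<in> R}))"

definition B_rim :: "nat \<Rightarrow> (nat \<times> nat) set \<Rightarrow> int multiset" where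
  "B_rim n R = (let i = label n (bottom_left R); j = label n (top_right R);
                    k = Min (label n ` R)
                in {#k#} + mset_set {k+1..i} + mset_set {k+1..j})"

text \<open>Multiset union over the rim decomposition R_1,...,R_s; there are at most
  card (young n M) nonempty rims.\<close>
definition B_pi :: "nat \<Rightarrow> (nat \<times> nat) set \<Rightarrow> int multiset" where
  "B_pi n M = (\<Sum>l < card (young n M).
       if remaining (young n M) l = {} then {#}
       else B_rim n (rim (remaining (young n M) l)))"

definition mB :: "nat \<Rightarrow> (nat \<times> nat) set \<Rightarrow> nat \<Rightarrow> nat" where
  "mB n M p = count (B_pi n M) (int p)"

end

theory Submission
  imports Defs
begin



definition yd :: "(nat \<times> nat) set \<Rightarrow> bool" where
 "yd D \<longleftrightarrow> finite D \<and> (\<forall>x y. (x,y)\<in>D \<longrightarrow> 1 \<le> x \<and> 1 \<le> y) \<and>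
   (\<forall>x y x' y'. (x,y)\<in>D \<longrightarrow> 1 \<le> x' \<longrightarrow> x' \<le> x \<longrightarrow> 1 \<le> y' \<longrightarrow> y' \<le> y \<longrightarrow> (x',y')\<in>D)"

definition diag :: "(nat \<times> nat) set \<Rightarrow> int \<Rightarrow> (nat \<times> nat) set" where
 "diag D d = {b\<in>D. int (snd b) - int (fst b) = d}"

definition dg :: "(nat \<times> nat) set \<Rightarrow> int \<Rightarrow> nat" where
 "dg D d = card (diag D d)"

definition cell0 :: "int \<Rightarrow> nat \<times> nat" where
 "cell0 d = (if d \<ge> 0 then (1, nat d + 1) else (nat (-d) + 1, 1))"

lemma yd_finite: "yd D \<Longrightarrow> finite D" unfolding yd_def by (elim conjE)
lemma yd_pos: "yd D \<Longrightarrow> (x,y)\<in>D \<Longrightarrow> 1 \<le> x \<and> 1 \<le> y" unfolding yd_def by (elim conjE) blast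
lemma yd_down: "yd D \<Longrightarrow> (x,y)\<in>D \<Longrightarrow> 1 \<le> x' \<Longrightarrow> x' \<le> x \<Longrightarrow> 1 \<le> y' \<Longrightarrow> y' \<le> y \<Longrightarrow> (x',y')\<in>D"
  unfolding yd_def by (elim conjE) blast
lemma ydI: "finite D \<Longrightarrow> (\<And>x y. (x,y)\<in>D \<Longrightarrow> 1 \<le> x \<and> 1 \<le> y) \<Longrightarrow>
   (\<And>x y x' y'. (x,y)\<in>D \<Longrightarrow> 1 \<le> x' \<Longrightarrow> x' \<le> x \<Longrightarrow> 1 \<le> y' \<Longrightarrow> y' \<le> y \<Longrightarrow> (x',y')\<in>D) \<Longrightarrow> yd D"
  unfolding yd_def by blast
lemma rim_mem: "(x,y) \<in> rim D \<longleftrightarrow> (x,y)\<in>D \<and> (x+1,y+1) \<notin> D"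
  by (simp add: rim_def)

lemma Drim_mem: "(x,y) \<in> D - rim D \<longleftrightarrow> (x,y)\<in>D \<and> (x+1,y+1) \<in> D"
  by (auto simp add: rim_def)

lemma yd_Drim: assumes "yd D" shows "yd (D - rim D)"
proof (rule ydI)
  show "finite (D - rim D)" using yd_finite[OF assms] by simp
  show "\<And>x y. (x,y)\<in>D - rim D \<Longrightarrow> 1 \<le> x \<and> 1 \<le> y" using yd_pos[OF assms] by blast
  fix x y x' y' assume h: "(x,y)\<in>D - rim D" "1 \<le> x'" "x' \<le> x" "1 \<le> y'" "y' \<le> y"
  then have "(x+1,y+1)\<in>D" "(x,y) \<in> D" using Drim_mem by blast+
  then have "(x'+1,y'+1)\<in>D" "(x',y')\<in>D" using yd_down[OF assms] h by auto
  then show "(x',y')\<in>D - rim D" using Drim_mem by blast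
qed

lemma diag_nonempty: assumes "yd D" shows "diag D d \<noteq> {} \<longleftrightarrow> cell0 d \<in> D"
proof
  assume "diag D d \<noteq> {}"
  then obtain x y where b: "(x,y)\<in>D" "int y - int x = d" by (auto simp: diag_def)
  have p: "1 \<le> x" "1 \<le> y" using yd_pos[OF assms b(1)] by auto
  show "cell0 d \<in> D"
  proof (cases "d \<ge> 0")
    case True
    then have "cell0 d = (1, nat d + 1)" by (simp add: cell0_def)
    moreover have "nat d + 1 \<le> y" using b p True by linarith
    ultimately show ?thesis using yd_down[OF assms b(1)] p by auto
  next
    case False
    then have "cell0 d = (nat (-d) + 1, 1)" by (simp add: cell0_def)
    moreover have "nat (-d) + 1 \<le> x" using b p False by linarith
    ultimately show ?thesis using yd_down[OF assms b(1)] p by auto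
  qed
next
  assume "cell0 d \<in> D"
  moreover have "int (snd (cell0 d)) - int (fst (cell0 d)) = d" by (simp add: cell0_def)
  ultimately show "diag D d \<noteq> {}" unfolding diag_def by (metis (mono_tags, lifting) empty_Collect_eq)
qed

lemma dg_rem: assumes "yd D"
  shows "int (dg D d) = int (dg (D - rim D) d) + (if cell0 d \<in> D then 1 else 0)"
proof -
  let ?f = "\<lambda>(x::nat,y::nat). (x+1,y+1)"
  define S where "S = {b\<in>diag D d. 2 \<le> fst b \<and> 2 \<le> snd b}"
  define T where "T = {b\<in>diag D d. fst b = 1 \<or> snd b = 1}"
  have fin: "finite (diag D d)" using yd_finite[OF assms] by (simp add: diag_def)
  have split: "diag D d = S \<union> T" "S \<inter> T = {}"
    using yd_pos[OF assms] by (force simp: S_def T_def diag_def)+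
  have img: "S = ?f ` diag (D - rim D) d"
  proof
    show "S \<subseteq> ?f ` diag (D - rim D) d"
    proof
      fix b assume "b \<in> S"
      then obtain x y where b: "b = (x,y)" "(x,y)\<in>D" "int y - int x = d" "2 \<le> x" "2 \<le> y"
        unfolding S_def diag_def by (cases b) auto
      have "(x-1,y-1) \<in> D" using b yd_down[OF assms b(2)] by auto
      moreover have "(x-1+1,y-1+1) \<in> D" using b by auto
      ultimately have "(x-1,y-1) \<in> D - rim D" using Drim_mem by blast
      moreover have "int (y-1) - int (x-1) = d" using b by auto
      ultimately have "(x-1,y-1) \<in> diag (D - rim D) d" by (simp add: diag_def)
      moreover have "b = ?f (x-1,y-1)" using b by auto
      ultimately show "b \<in> ?f ` diag (D - rim D) d" by blast
    qed
  next
    show "?f ` diag (D - rim D) d \<subseteq> S"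
      using yd_pos[OF assms] by (auto simp: S_def diag_def rim_def)
  qed
  have "inj_on ?f (diag (D - rim D) d)" by (auto simp: inj_on_def)
  then have cS: "card S = dg (D - rim D) d" by (simp add: img card_image dg_def)
  have "T = (if cell0 d \<in> D then {cell0 d} else {})"
  proof -
    have "T \<subseteq> {cell0 d}"
    proof
      fix b assume "b \<in> T"
      then obtain x y where b: "b = (x,y)" "(x,y)\<in>D" "int y - int x = d" "x = 1 \<or> y = 1"
        unfolding T_def diag_def by (cases b) auto
      have "1 \<le> x" "1 \<le> y" using yd_pos[OF assms b(2)] by auto
      then show "b \<in> {cell0 d}" using b unfolding cell0_def by auto
    qed
    moreover have "cell0 d \<in> D \<Longrightarrow> cell0 d \<in> T"
      by (auto simp: T_def diag_def cell0_def)
    moreover have "T \<subseteq> D" by (auto simp: T_def diag_def)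
    ultimately have "T \<subseteq> {cell0 d} \<inter> D" "cell0 d \<in> D \<Longrightarrow> T = {cell0 d}" by blast+
    then show ?thesis by (cases "cell0 d \<in> D") auto
  qed
  then have cT: "card T = (if cell0 d \<in> D then 1 else 0)" by simp
  have "dg D d = card S + card T" unfolding dg_def using split fin
    by (metis card_Un_disjoint finite_Un)
  then show ?thesis using cS cT by simp
qed




lemma rim_sub: "rim D \<subseteq> D" by (auto simp: rim_def)

definition Hh :: "nat \<Rightarrow> (nat \<times> nat) set \<Rightarrow> int \<Rightarrow> int" where
  "Hh n D d = int n - \<bar>d\<bar> - 2 * int (dg D d)"

lemma dg_rim: assumes "yd D" "(x,y) \<in> rim D"
  shows "dg D (int y - int x) = min x y"
proof -
  have xy: "(x,y)\<in>D" "(x+1,y+1)\<notin>D" using assms(2) rim_mem by blast+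
  have p: "1 \<le> x" "1 \<le> y" using yd_pos[OF assms(1) xy(1)] by auto
  have eq: "diag D (int y - int x) = (\<lambda>j. (x-j, y-j)) ` {..<min x y}"
  proof
    show "diag D (int y - int x) \<subseteq> (\<lambda>j. (x-j, y-j)) ` {..<min x y}"
    proof
      fix b assume "b \<in> diag D (int y - int x)"
      then obtain x' y' where b: "b = (x',y')" "(x',y')\<in>D" "int y' - int x' = int y - int x"
        unfolding diag_def by (cases b) auto
      have p': "1 \<le> x'" "1 \<le> y'" using yd_pos[OF assms(1) b(2)] by auto
      have "x' \<le> x"
      proof (rule ccontr)
        assume "\<not> x' \<le> x"
        then have "x+1 \<le> x'" "y+1 \<le> y'" using b(3) by auto
        then have "(x+1,y+1)\<in>D" using yd_down[OF assms(1) b(2), of "x+1" "y+1"] by auto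
        then show False using xy by blast
      qed
      then have "b = (x - (x-x'), y - (x-x'))" "x - x' < min x y" using b p p' by auto
      then show "b \<in> (\<lambda>j. (x-j, y-j)) ` {..<min x y}" by blast
    qed
  next
    show "(\<lambda>j. (x-j, y-j)) ` {..<min x y} \<subseteq> diag D (int y - int x)"
    proof
      fix b assume "b \<in> (\<lambda>j. (x-j, y-j)) ` {..<min x y}"
      then obtain j where j: "j < min x y" "b = (x-j,y-j)" by blast
      have "(x-j,y-j)\<in>D" using yd_down[OF assms(1) xy(1), of "x-j" "y-j"] j by auto
      then show "b \<in> diag D (int y - int x)" using j by (auto simp: diag_def)
    qed
  qed
  have "inj_on (\<lambda>j. (x-j, y-j)) {..<min x y}" by (auto simp: inj_on_def)
  then show ?thesis unfolding dg_def eq by (simp add: card_image)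
qed

lemma label_rim: assumes "yd D" "(x,y) \<in> rim D"
  shows "label n (x,y) = Hh n D (int y - int x) + 1"
  using dg_rim[OF assms] by (simp add: label_def Hh_def min_def)

definition rr :: "(nat \<times> nat) set \<Rightarrow> nat" where "rr D = Max {x. (x,1)\<in>D}"
definition cc :: "(nat \<times> nat) set \<Rightarrow> nat" where "cc D = Max {y. (1,y)\<in>D}"

lemma yd_11: assumes "yd D" "D \<noteq> {}" shows "(1,1) \<in> D"
proof -
  obtain x y where xy: "(x,y)\<in>D" using assms(2) by auto
  then show ?thesis using yd_down[OF assms(1) xy, of 1 1] yd_pos[OF assms(1) xy] by auto
qed

lemma rr_prop: assumes "yd D" "D \<noteq> {}"
  shows "(rr D, 1) \<in> D" "1 \<le> rr D" "(x,1)\<in>D \<longleftrightarrow> 1 \<le> x \<and> x \<le> rr D"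
proof -
  have "{x. (x,1)\<in>D} \<subseteq> fst ` D" by (metis (mono_tags, lifting) fst_conv image_eqI mem_Collect_eq subsetI)
  then have fin: "finite {x. (x,1)\<in>D}"
    using finite_subset yd_finite[OF assms(1)] by blast
  have ne: "1 \<in> {x. (x,1)\<in>D}" using yd_11[OF assms] by simp
  show m: "(rr D, 1) \<in> D" using Max_in[OF fin] ne unfolding rr_def by blast
  show "1 \<le> rr D" using Max_ge[OF fin ne] unfolding rr_def by simp
  show "(x,1)\<in>D \<longleftrightarrow> 1 \<le> x \<and> x \<le> rr D"
  proof
    assume "(x,1)\<in>D" then show "1 \<le> x \<and> x \<le> rr D"
      using Max_ge[OF fin] yd_pos[OF assms(1)] unfolding rr_def by auto
  next
    assume "1 \<le> x \<and> x \<le> rr D" then show "(x,1)\<in>D"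
      using yd_down[OF assms(1) m, of x 1] by auto
  qed
qed

lemma cc_prop: assumes "yd D" "D \<noteq> {}"
  shows "(1, cc D) \<in> D" "1 \<le> cc D" "(1,y)\<in>D \<longleftrightarrow> 1 \<le> y \<and> y \<le> cc D"
proof -
  have "{y. (1,y)\<in>D} \<subseteq> snd ` D" by (metis (mono_tags, lifting) snd_conv image_eqI mem_Collect_eq subsetI)
  then have fin: "finite {y. (1,y)\<in>D}"
    using finite_subset yd_finite[OF assms(1)] by blast
  have ne: "1 \<in> {y. (1,y)\<in>D}" using yd_11[OF assms] by simp
  show m: "(1, cc D) \<in> D" using Max_in[OF fin] ne unfolding cc_def by blast
  show "1 \<le> cc D" using Max_ge[OF fin ne] unfolding cc_def by simp
  show "(1,y)\<in>D \<longleftrightarrow> 1 \<le> y \<and> y \<le> cc D"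
  proof
    assume "(1,y)\<in>D" then show "1 \<le> y \<and> y \<le> cc D"
      using Max_ge[OF fin] yd_pos[OF assms(1)] unfolding cc_def by auto
  next
    assume "1 \<le> y \<and> y \<le> cc D" then show "(1,y)\<in>D"
      using yd_down[OF assms(1) m, of 1 y] by auto
  qed
qed

lemma cell0_iff: assumes "yd D" "D \<noteq> {}"
  shows "cell0 d \<in> D \<longleftrightarrow> 1 - int (rr D) \<le> d \<and> d \<le> int (cc D) - 1"
proof (cases "d \<ge> 0")
  case True
  then have "cell0 d = (1, nat d + 1)" by (simp add: cell0_def)
  then show ?thesis using cc_prop(3)[OF assms, of "nat d + 1"] rr_prop(2)[OF assms] True by auto
next
  case False
  then have "cell0 d = (nat (-d) + 1, 1)" by (simp add: cell0_def)
  then show ?thesis using rr_prop(3)[OF assms, of "nat (-d) + 1"] cc_prop(2)[OF assms] False by auto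
qed

lemma bottom_left_rim: assumes "yd D" "D \<noteq> {}"
  shows "bottom_left (rim D) = (rr D, 1)"
proof -
  have r1: "(rr D, 1) \<in> rim D"
  proof -
    have "(rr D + 1, 1 + 1) \<notin> D"
    proof
      assume h: "(rr D + 1, 1 + 1) \<in> D"
      have "(rr D + 1, 1) \<in> D" using yd_down[OF assms(1) h, of "rr D + 1" 1] by simp
      then show False using rr_prop(3)[OF assms] by simp
    qed
    then show ?thesis using rr_prop(1)[OF assms] rim_mem by blast
  qed
  have fin: "finite (rim D)" using yd_finite[OF assms(1)] finite_subset[OF rim_sub] by blast
  have "Min (snd ` rim D) = 1"
  proof (rule Min_eqI)
    show "finite (snd ` rim D)" using fin by simp
    show "\<And>y. y \<in> snd ` rim D \<Longrightarrow> 1 \<le> y" using yd_pos[OF assms(1)] by (auto simp: rim_def)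
    show "1 \<in> snd ` rim D" using r1 by force
  qed
  moreover have "Max {x. (x,1) \<in> rim D} = rr D"
  proof (rule Max_eqI)
    show "finite {x. (x,1) \<in> rim D}"
      using finite_subset[of _ "fst ` rim D"] fin by (metis (mono_tags, lifting) fst_conv image_eqI mem_Collect_eq subsetI finite_imageI)
    show "\<And>x. x \<in> {x. (x,1) \<in> rim D} \<Longrightarrow> x \<le> rr D" using rr_prop(3)[OF assms] by (auto simp: rim_def)
    show "rr D \<in> {x. (x,1) \<in> rim D}" using r1 by simp
  qed
  ultimately show ?thesis by (simp add: bottom_left_def)
qed

lemma top_right_rim: assumes "yd D" "D \<noteq> {}"
  shows "top_right (rim D) = (1, cc D)"
proof -
  have r1: "(1, cc D) \<in> rim D"
  proof -
    have "(1 + 1, cc D + 1) \<notin> D"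
    proof
      assume h: "(1 + 1, cc D + 1) \<in> D"
      have "(1, cc D + 1) \<in> D" using yd_down[OF assms(1) h, of 1 "cc D + 1"] by simp
      then show False using cc_prop(3)[OF assms] by simp
    qed
    then show ?thesis using cc_prop(1)[OF assms] rim_mem by blast
  qed
  have fin: "finite (rim D)" using yd_finite[OF assms(1)] finite_subset[OF rim_sub] by blast
  have "Min (fst ` rim D) = 1"
  proof (rule Min_eqI)
    show "finite (fst ` rim D)" using fin by simp
    show "\<And>y. y \<in> fst ` rim D \<Longrightarrow> 1 \<le> y" using yd_pos[OF assms(1)] by (auto simp: rim_def)
    show "1 \<in> fst ` rim D" using r1 by force
  qed
  moreover have "Max {y. (1,y) \<in> rim D} = cc D"
  proof (rule Max_eqI)
    show "finite {y. (1,y) \<in> rim D}"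
      using finite_subset[of _ "snd ` rim D"] fin by (metis (mono_tags, lifting) snd_conv image_eqI mem_Collect_eq subsetI finite_imageI)
    show "\<And>y. y \<in> {y. (1,y) \<in> rim D} \<Longrightarrow> y \<le> cc D" using cc_prop(3)[OF assms] by (auto simp: rim_def)
    show "cc D \<in> {y. (1,y) \<in> rim D}" using r1 by simp
  qed
  ultimately show ?thesis by (simp add: top_right_def)
qed

lemma label_img: assumes "yd D" "D \<noteq> {}"
  shows "label n ` rim D = (\<lambda>d. Hh n D d + 1) ` {1 - int (rr D) .. int (cc D) - 1}"
proof
  show "label n ` rim D \<subseteq> (\<lambda>d. Hh n D d + 1) ` {1 - int (rr D) .. int (cc D) - 1}"
  proof
    fix l assume "l \<in> label n ` rim D"
    then obtain x y where b: "(x,y)\<in>rim D" "l = label n (x,y)" by auto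
    have "(x,y) \<in> diag D (int y - int x)" using b(1) by (simp add: diag_def rim_def)
    then have "cell0 (int y - int x) \<in> D" using diag_nonempty[OF assms(1)] by blast
    then have "int y - int x \<in> {1 - int (rr D) .. int (cc D) - 1}" using cell0_iff[OF assms] by simp
    moreover have "l = Hh n D (int y - int x) + 1" using b label_rim[OF assms(1)] by simp
    ultimately show "l \<in> (\<lambda>d. Hh n D d + 1) ` {1 - int (rr D) .. int (cc D) - 1}" by blast
  qed
next
  show "(\<lambda>d. Hh n D d + 1) ` {1 - int (rr D) .. int (cc D) - 1} \<subseteq> label n ` rim D"
  proof
    fix l assume "l \<in> (\<lambda>d. Hh n D d + 1) ` {1 - int (rr D) .. int (cc D) - 1}"
    then obtain d where d: "d \<in> {1 - int (rr D) .. int (cc D) - 1}" "l = Hh n D d + 1" by auto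
    have ne: "diag D d \<noteq> {}" using d(1) cell0_iff[OF assms] diag_nonempty[OF assms(1)] by simp
    have fin: "finite (diag D d)" using yd_finite[OF assms(1)] by (simp add: diag_def)
    define x where "x = Max (fst ` diag D d)"
    have "x \<in> fst ` diag D d" unfolding x_def using fin ne by simp
    then obtain y where xy: "(x,y) \<in> diag D d" by force
    have "(x,y) \<in> rim D"
    proof -
      have "(x+1,y+1) \<notin> D"
      proof
        assume "(x+1,y+1)\<in>D"
        then have "(x+1,y+1) \<in> diag D d" using xy by (simp add: diag_def)
        then have "x + 1 \<in> fst ` diag D d" by (metis fst_conv image_eqI)
        then have "x+1 \<le> x" unfolding x_def using fin Max_ge by blast
        then show False by simp
      qed
      then show ?thesis using xy by (simp add: diag_def rim_def)
    qed
    moreover have "l = label n (x,y)"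
      using label_rim[OF assms(1) \<open>(x,y) \<in> rim D\<close>] xy d by (simp add: diag_def)
    ultimately show "l \<in> label n ` rim D" by blast
  qed
qed




lemma core:
  fixes m m' :: "int \<Rightarrow> int" and n q d1 d2 k mw mw' :: int
  assumes d1: "d1 \<le> 0" and d2: "0 \<le> d2" and q1: "1 \<le> q"
    and out: "\<And>d. d < d1 \<or> d2 < d \<Longrightarrow> m d = 0"
    and inn: "\<And>d. d1 \<le> d \<Longrightarrow> d \<le> d2 \<Longrightarrow> 1 \<le> m d"
    and m'def: "\<And>d. m' d = (if d1 \<le> d \<and> d \<le> d2 then m d - 1 else m d)"
    and kl: "\<And>d. d1 \<le> d \<Longrightarrow> d \<le> d2 \<Longrightarrow> k \<le> n - \<bar>d\<bar> - 2 * m d + 1"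
    and ke: "\<exists>d. d1 \<le> d \<and> d \<le> d2 \<and> k = n - \<bar>d\<bar> - 2 * m d + 1"
    and wl: "\<And>d. -q \<le> d \<Longrightarrow> d \<le> q \<Longrightarrow> mw \<le> n - \<bar>d\<bar> - 2 * m d"
    and we: "\<exists>d. -q \<le> d \<and> d \<le> q \<and> mw = n - \<bar>d\<bar> - 2 * m d"
    and wl': "\<And>d. -q \<le> d \<Longrightarrow> d \<le> q \<Longrightarrow> mw' \<le> n - \<bar>d\<bar> - 2 * m' d"
    and we': "\<exists>d. -q \<le> d \<and> d \<le> q \<and> mw' = n - \<bar>d\<bar> - 2 * m' d"
  shows "(if k = n - q then 1 else 0) + (if k < n - q \<and> n - q \<le> n + d1 - 1 then 1 else 0)
        + (if k < n - q \<and> n - q \<le> n - d2 - 1 then 1 else 0)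
        + (n - q - m' (-q) - m' q - mw') = n - q - m (-q) - m q - mw"
proof -
  obtain e where e: "-q \<le> e" "e \<le> q" "mw = n - \<bar>e\<bar> - 2 * m e" using we by blast
  obtain e' where e': "-q \<le> e'" "e' \<le> q" "mw' = n - \<bar>e'\<bar> - 2 * m' e'" using we' by blast
  obtain f where f: "d1 \<le> f" "f \<le> d2" "k = n - \<bar>f\<bar> - 2 * m f + 1" using ke by blast
  have we'e: "mw' \<le> n - \<bar>e\<bar> - 2 * m' e" using wl' e by auto
  have wee': "mw \<le> n - \<bar>e'\<bar> - 2 * m e'" using wl e' by auto
  consider (A) "d1 \<le> -q" "q \<le> d2" | (B) "-q < d1" "d2 < q" | (C) "d1 \<le> -q" "d2 < q" | (D) "-q < d1" "q \<le> d2"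
    by linarith
  then show ?thesis
  proof cases
    case A
    have mq: "m' q = m q - 1" "m' (-q) = m (-q) - 1" "1 \<le> m q" using m'def inn A q1 by auto
    have "k \<le> n - q - 1" using kl[of q] A mq q1 by auto
    moreover have "mw' = mw + 2"
      using e e' we'e wee' m'def[of e] m'def[of e'] A by (auto split: if_splits)
    ultimately show ?thesis using mq A by auto
  next
    case B
    have mq: "m' q = 0" "m' (-q) = 0" "m q = 0" "m (-q) = 0" using m'def out B by auto
    have mw1: "mw \<le> n - q" using wl[of q] mq q1 by auto
    have mw2: "mw \<le> k - 1" using wl[of f] f B by auto
    have mw3: "mw = n - q \<or> mw = k - 1"
    proof (cases "d1 \<le> e \<and> e \<le> d2")
      case True then show ?thesis using kl[of e] e mw2 by auto
    next
      case False then show ?thesis using out[of e] e mw1 by auto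
    qed
    have mw'1: "mw' \<le> n - q" using wl'[of q] mq q1 by auto
    have mw'2: "mw' \<le> k + 1" using wl'[of f] f B m'def[of f] by auto
    have mw'3: "mw' = n - q \<or> mw' = k + 1"
    proof (cases "d1 \<le> e' \<and> e' \<le> d2")
      case True then show ?thesis using kl[of e'] e' mw'2 m'def[of e'] by auto
    next
      case False then show ?thesis using out[of e'] e' mw'1 m'def[of e'] by auto
    qed
    show ?thesis using mq mw1 mw2 mw3 mw'1 mw'2 mw'3 B by auto
  next
    case C
    have mq: "m' q = 0" "m q = 0" "m' (-q) = m (-q) - 1" "1 \<le> m (-q)" using m'def out inn[of "-q"] C q1 d2 by auto
    have mwl: "mw \<le> n - q - 2" using wl[of "-q"] mq q1 by auto
    have eA: "e \<le> d2"
    proof (rule ccontr)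
      assume "\<not> e \<le> d2" then have "m e = 0" using out by auto
      then show False using e mwl by (auto simp: abs_if split: if_splits)
    qed
    have "k \<le> mw + 1" using kl[of e] eA e C by auto
    moreover have "mw' = mw + 2"
    proof -
      have "mw' \<le> mw + 2" using we'e m'def[of e] eA e C by auto
      moreover have "mw' \<ge> mw + 2"
      proof (cases "e' \<le> d2")
        case True then show ?thesis using wee' e' m'def[of e'] C by auto
      next
        case False then show ?thesis using out[of e'] e' m'def[of e'] mwl by auto
      qed
      ultimately show ?thesis by simp
    qed
    ultimately show ?thesis using mq C mwl by auto
  next
    case D
    have mq: "m' (-q) = 0" "m (-q) = 0" "m' q = m q - 1" "1 \<le> m q" using m'def out inn[of q] D q1 d1 by auto
    have mwl: "mw \<le> n - q - 2" using wl[of q] mq q1 by auto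
    have eA: "d1 \<le> e"
    proof (rule ccontr)
      assume "\<not> d1 \<le> e" then have "m e = 0" using out by auto
      then show False using e mwl by (auto simp: abs_if split: if_splits)
    qed
    have "k \<le> mw + 1" using kl[of e] eA e D by auto
    moreover have "mw' = mw + 2"
    proof -
      have "mw' \<le> mw + 2" using we'e m'def[of e] eA e D by auto
      moreover have "mw' \<ge> mw + 2"
      proof (cases "d1 \<le> e'")
        case True then show ?thesis using wee' e' m'def[of e'] D by auto
      next
        case False then show ?thesis using out[of e'] e' m'def[of e'] mwl by auto
      qed
      ultimately show ?thesis by simp
    qed
    ultimately show ?thesis using mq D mwl by auto
  qed
qed




definition Fv :: "nat \<Rightarrow> (nat \<times> nat) set \<Rightarrow> int \<Rightarrow> int" where
  "Fv n D q = int n - q - int (dg D (-q)) - int (dg D q) - Min (Hh n D ` {-q..q})"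

lemma dg_zero: assumes "yd D" "cell0 d \<notin> D" shows "dg D d = 0"
  using diag_nonempty[OF assms(1), of d] assms(2) by (simp add: dg_def)

lemma dg_pos: assumes "yd D" "cell0 d \<in> D" shows "1 \<le> dg D d"
proof -
  have "diag D d \<noteq> {}" using diag_nonempty[OF assms(1), of d] assms(2) by simp
  moreover have "finite (diag D d)" using yd_finite[OF assms(1)] by (simp add: diag_def)
  ultimately show ?thesis unfolding dg_def by (simp add: Suc_le_eq card_gt_0_iff)
qed

lemma step:
  assumes Y: "yd D" and ne: "D \<noteq> {}" and q1: "1 \<le> q"
  shows "int (count (B_rim n (rim D)) (int n - q)) + Fv n (D - rim D) q = Fv n D q"
proof -
  define d1 where "d1 = 1 - int (rr D)"
  define d2 where "d2 = int (cc D) - 1"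
  define m where "m = (\<lambda>d. int (dg D d))"
  define m' where "m' = (\<lambda>d. int (dg (D - rim D) d))"
  define k where "k = Min (label n ` rim D)"
  define mw where "mw = Min (Hh n D ` {-q..q})"
  define mw' where "mw' = Min (Hh n (D - rim D) ` {-q..q})"
  have Y': "yd (D - rim D)" using yd_Drim[OF Y] .
  have c0: "\<And>d. cell0 d \<in> D \<longleftrightarrow> d1 \<le> d \<and> d \<le> d2" using cell0_iff[OF Y ne] by (simp add: d1_def d2_def)
  have hd1: "d1 \<le> 0" using rr_prop(2)[OF Y ne] by (simp add: d1_def)
  have hd2: "0 \<le> d2" using cc_prop(2)[OF Y ne] by (simp add: d2_def)
  have out: "\<And>d. d < d1 \<or> d2 < d \<Longrightarrow> m d = 0" using dg_zero[OF Y] c0 by (auto simp: m_def)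
  have inn: "\<And>d. d1 \<le> d \<Longrightarrow> d \<le> d2 \<Longrightarrow> 1 \<le> m d" using dg_pos[OF Y] c0 unfolding m_def by force
  have m'def: "\<And>d. m' d = (if d1 \<le> d \<and> d \<le> d2 then m d - 1 else m d)"
    using dg_rem[OF Y] c0 unfolding m_def m'_def by (auto split: if_splits)
  have HH: "\<And>d. Hh n D d = int n - \<bar>d\<bar> - 2 * m d" by (simp add: Hh_def m_def)
  have HH': "\<And>d. Hh n (D - rim D) d = int n - \<bar>d\<bar> - 2 * m' d" by (simp add: Hh_def m'_def)
  have limg: "label n ` rim D = (\<lambda>d. Hh n D d + 1) ` {d1..d2}"
    using label_img[OF Y ne] by (simp add: d1_def d2_def)
  have finL: "finite ((\<lambda>d. Hh n D d + 1) ` {d1..d2})" by simp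
  have neL: "(\<lambda>d. Hh n D d + 1) ` {d1..d2} \<noteq> {}" using hd1 hd2 by auto
  have kl: "\<And>d. d1 \<le> d \<Longrightarrow> d \<le> d2 \<Longrightarrow> k \<le> int n - \<bar>d\<bar> - 2 * m d + 1"
  proof -
    fix d assume "d1 \<le> d" "d \<le> d2"
    then have "Hh n D d + 1 \<in> (\<lambda>d. Hh n D d + 1) ` {d1..d2}" by auto
    then have "k \<le> Hh n D d + 1" unfolding k_def limg using Min_le finL by blast
    then show "k \<le> int n - \<bar>d\<bar> - 2 * m d + 1" using HH by simp
  qed
  have ke: "\<exists>d. d1 \<le> d \<and> d \<le> d2 \<and> k = int n - \<bar>d\<bar> - 2 * m d + 1"
  proof -
    have "k \<in> (\<lambda>d. Hh n D d + 1) ` {d1..d2}" unfolding k_def limg using Min_in finL neL by blast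
    then show ?thesis using HH by auto
  qed
  have finW: "\<And>H. finite (H ` {-q..q})" by simp
  have neW: "\<And>H. H ` {-q..q} \<noteq> {}" using q1 by auto
  have wl: "\<And>d. -q \<le> d \<Longrightarrow> d \<le> q \<Longrightarrow> mw \<le> int n - \<bar>d\<bar> - 2 * m d"
    unfolding mw_def using Min_le[OF finW] HH by (metis atLeastAtMost_iff image_eqI)
  have we: "\<exists>d. -q \<le> d \<and> d \<le> q \<and> mw = int n - \<bar>d\<bar> - 2 * m d"
  proof -
    have "mw \<in> Hh n D ` {-q..q}" unfolding mw_def using Min_in[OF finW neW] by blast
    then show ?thesis using HH by auto
  qed
  have wl': "\<And>d. -q \<le> d \<Longrightarrow> d \<le> q \<Longrightarrow> mw' \<le> int n - \<bar>d\<bar> - 2 * m' d"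
    unfolding mw'_def using Min_le[OF finW] HH' by (metis atLeastAtMost_iff image_eqI)
  have we': "\<exists>d. -q \<le> d \<and> d \<le> q \<and> mw' = int n - \<bar>d\<bar> - 2 * m' d"
  proof -
    have "mw' \<in> Hh n (D - rim D) ` {-q..q}" unfolding mw'_def using Min_in[OF finW neW] by blast
    then show ?thesis using HH' by auto
  qed
  have C: "(if k = int n - q then 1 else 0) + (if k < int n - q \<and> int n - q \<le> int n + d1 - 1 then 1 else 0)
        + (if k < int n - q \<and> int n - q \<le> int n - d2 - 1 then 1 else 0)
        + (int n - q - m' (-q) - m' q - mw') = int n - q - m (-q) - m q - mw"
    by (rule core[OF hd1 hd2 q1 out inn m'def kl ke wl we wl' we'])
  have bl: "label n (bottom_left (rim D)) = int n + d1 - 1"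
    using bottom_left_rim[OF Y ne] by (simp add: label_def d1_def)
  have tr: "label n (top_right (rim D)) = int n - d2 - 1"
    using top_right_rim[OF Y ne] by (simp add: label_def d2_def)
  have cnt: "int (count (B_rim n (rim D)) (int n - q)) = (if k = int n - q then 1 else 0) + (if k < int n - q \<and> int n - q \<le> int n + d1 - 1 then 1 else 0)
        + (if k < int n - q \<and> int n - q \<le> int n - d2 - 1 then 1 else 0)"
    unfolding B_rim_def Let_def bl tr k_def[symmetric] by (auto simp: count_mset_set)
  show ?thesis using C cnt unfolding Fv_def mw_def mw'_def m_def m'_def by linarith
qed




definition Sg :: "nat \<Rightarrow> (nat \<times> nat) set \<Rightarrow> nat \<Rightarrow> int multiset" where
  "Sg n D N = (\<Sum>l < N. if remaining D l = {} then {#} else B_rim n (rim (remaining D l)))"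

lemma rem_Suc: "remaining D (Suc l) = remaining (D - rim D) l"
  unfolding remaining_def by (simp only: funpow_Suc_right comp_apply)

lemma rem_0: "remaining D 0 = D" by (simp add: remaining_def)

lemma rem_empty: "remaining {} l = {}"
  by (induction l) (simp_all add: rem_0 rem_Suc)

lemma Sg_Suc: "Sg n D (Suc N) = (if D = {} then {#} else B_rim n (rim D)) + Sg n (D - rim D) N"
proof -
  have "Sg n D (Suc N) = (if remaining D 0 = {} then {#} else B_rim n (rim (remaining D 0)))
     + (\<Sum>l < N. if remaining D (Suc l) = {} then {#} else B_rim n (rim (remaining D (Suc l))))"
    unfolding Sg_def by (rule sum.lessThan_Suc_shift)
  also have "\<dots> = (if D = {} then {#} else B_rim n (rim D)) + Sg n (D - rim D) N"
    unfolding Sg_def rem_0 by (simp only: rem_Suc)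
  finally show ?thesis .
qed

lemma Sg_empty: "Sg n {} N = {#}"
  unfolding Sg_def by (simp add: rem_empty)

lemma Fv_empty: assumes "1 \<le> q" shows "Fv n {} q = 0"
proof -
  have dg0: "\<And>d. dg {} d = 0" by (simp add: dg_def diag_def)
  have "Min (Hh n {} ` {-q..q}) = int n - q"
  proof (rule Min_eqI)
    show "finite (Hh n {} ` {-q..q})" by simp
    show "\<And>y. y \<in> Hh n {} ` {-q..q} \<Longrightarrow> int n - q \<le> y" by (auto simp: Hh_def dg0)
    show "int n - q \<in> Hh n {} ` {-q..q}"
    proof
      show "int n - q = Hh n {} q" using assms by (simp add: Hh_def dg0)
      show "q \<in> {-q..q}" using assms by simp
    qed
  qed
  then show ?thesis by (simp add: Fv_def dg0)
qed

lemma rim_ne: assumes "yd D" "D \<noteq> {}" shows "rim D \<noteq> {}"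
proof -
  have "(rr D + 1, 1 + 1) \<notin> D"
  proof
    assume h: "(rr D + 1, 1 + 1) \<in> D"
    have "(rr D + 1, 1) \<in> D" using yd_down[OF assms(1) h, of "rr D + 1" 1] by simp
    then show False using rr_prop(3)[OF assms] by simp
  qed
  then have "(rr D, 1) \<in> rim D" using rr_prop(1)[OF assms] rim_mem by blast
  then show ?thesis by blast
qed

lemma main_ind:
  assumes "1 \<le> q"
  shows "yd D \<Longrightarrow> card D \<le> N \<Longrightarrow> int (count (Sg n D N) (int n - q)) = Fv n D q"
proof (induction N arbitrary: D)
  case 0
  then have "D = {}" using yd_finite by auto
  then show ?case using Fv_empty[OF assms] by (simp add: Sg_def)
next
  case (Suc N)
  show ?case
  proof (cases "D = {}")
    case True
    then show ?thesis using Fv_empty[OF assms] Sg_empty by simp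
  next
    case False
    have fin: "finite D" using yd_finite[OF Suc.prems(1)] .
    have "rim D \<noteq> {}" using rim_ne[OF Suc.prems(1) False] .
    then have "D - rim D \<subset> D" using rim_sub by blast
    then have "card (D - rim D) < card D" using fin psubset_card_mono by blast
    then have "card (D - rim D) \<le> N" using Suc.prems(2) by simp
    then have IH: "int (count (Sg n (D - rim D) N) (int n - q)) = Fv n (D - rim D) q"
      using Suc.IH yd_Drim[OF Suc.prems(1)] by blast
    show ?thesis using step[OF Suc.prems(1) False assms, of n] IH False by (simp add: Sg_Suc)
  qed
qed




lemma nm1: "noncrossing_matching n M \<Longrightarrow> \<forall>(i,j)\<in>M. i < j \<and> 1 \<le> i \<and> j \<le> 2*n"
  unfolding noncrossing_matching_def by (elim conjE)
lemma nm2: "noncrossing_matching n M \<Longrightarrow> \<forall>x\<in>{1..2*n}. \<exists>!a. a \<in> M \<and> (fst a = x \<or> snd a = x)"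
  unfolding noncrossing_matching_def by (elim conjE)
lemma nm3: "noncrossing_matching n M \<Longrightarrow> \<forall>(i,j)\<in>M. \<forall>(k,l)\<in>M. \<not> (i < k \<and> k < j \<and> j < l)"
  unfolding noncrossing_matching_def by (elim conjE)

lemma nm_arch: assumes "noncrossing_matching n M" "(i,j)\<in>M" shows "i<j \<and> 1\<le>i \<and> j \<le> 2*n"
proof -
  have "\<forall>(i,j)\<in>M. i < j \<and> 1 \<le> i \<and> j \<le> 2*n" using nm1[OF assms(1)] .
  from bspec[OF this assms(2)] show ?thesis by simp
qed

lemma nm_nc: assumes "noncrossing_matching n M" "(i,j)\<in>M" "(k,l)\<in>M" shows "\<not>(i<k \<and> k<j \<and> j<l)"
proof -
  have "\<forall>(i,j)\<in>M. \<forall>(k,l)\<in>M. \<not> (i < k \<and> k < j \<and> j < l)" using nm3[OF assms(1)] .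
  from bspec[OF bspec[OF this assms(2), simplified] assms(3)] show ?thesis by simp
qed

lemma nm_same:
  assumes NM: "noncrossing_matching n M" and a: "a\<in>M" and b: "b\<in>M"
    and ha: "fst a = x \<or> snd a = x" and hb: "fst b = x \<or> snd b = x"
  shows "a = b"
proof -
  obtain i j where aij: "a = (i,j)" by (cases a)
  have "i<j \<and> 1\<le>i \<and> j \<le> 2*n" using nm_arch[OF NM] a aij by blast
  then have "x\<in>{1..2*n}" using ha aij by auto
  then have "\<exists>!a. a \<in> M \<and> (fst a = x \<or> snd a = x)" using nm2[OF NM] by blast
  then obtain c where "\<forall>y. y \<in> M \<and> (fst y = x \<or> snd y = x) \<longrightarrow> y = c" by (elim ex1E) blast
  then show ?thesis using a b ha hb by blast
qed

lemma nm_cover: "noncrossing_matching n M \<Longrightarrow> x\<in>{1..2*n} \<Longrightarrow> \<exists>a. a\<in>M \<and> (fst a = x \<or> snd a = x)"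
  using nm2 by blast

lemma nm_sub: assumes "noncrossing_matching n M" shows "M \<subseteq> {1..2*n} \<times> {1..2*n}"
proof
  fix a assume "a \<in> M"
  moreover obtain i j where "a = (i,j)" by (cases a)
  ultimately show "a \<in> {1..2*n} \<times> {1..2*n}" using nm_arch[OF assms, of i j] by auto
qed

lemma nm_finite: "noncrossing_matching n M \<Longrightarrow> finite M"
  using nm_sub finite_subset by blast

lemma nm_inj_fst: "noncrossing_matching n M \<Longrightarrow> inj_on fst M"
  unfolding inj_on_def using nm_same by blast

lemma nm_inj_snd: "noncrossing_matching n M \<Longrightarrow> inj_on snd M"
  unfolding inj_on_def using nm_same by blast

lemma nm_disj: assumes NM: "noncrossing_matching n M" shows "fst ` M \<inter> snd ` M = {}"
proof (rule ccontr)
  assume "fst ` M \<inter> snd ` M \<noteq> {}"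
  then obtain a b where ab: "a\<in>M" "b\<in>M" "fst a = snd b" by auto
  then have "a = b" using nm_same[OF NM, of a b "fst a"] by auto
  moreover obtain i j where "b = (i,j)" by (cases b)
  ultimately show False using nm_arch[OF NM] ab by auto
qed

lemma nm_union: assumes NM: "noncrossing_matching n M" shows "fst ` M \<union> snd ` M = {1..2*n}"
proof
  show "fst ` M \<union> snd ` M \<subseteq> {1..2*n}" using nm_sub[OF NM] by auto
  show "{1..2*n} \<subseteq> fst ` M \<union> snd ` M"
  proof
    fix x assume "x \<in> {1..2*n}"
    then obtain a where "a\<in>M" "fst a = x \<or> snd a = x" using nm_cover[OF NM] by blast
    then show "x \<in> fst ` M \<union> snd ` M" by auto
  qed
qed

lemma nm_card: assumes NM: "noncrossing_matching n M" shows "card (fst ` M) = n"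
proof -
  have f: "finite M" using nm_finite[OF NM] .
  have "card (fst ` M) = card M" "card (snd ` M) = card M"
    using card_image nm_inj_fst[OF NM] nm_inj_snd[OF NM] by auto
  moreover have "card (fst ` M \<union> snd ` M) = card (fst ` M) + card (snd ` M)"
    using card_Un_disjoint nm_disj[OF NM] f by blast
  ultimately show ?thesis using nm_union[OF NM] by simp
qed

definition LL :: "(nat \<times> nat) set \<Rightarrow> nat list" where "LL M = sorted_list_of_set (fst ` M)"

lemma LL_props: assumes NM: "noncrossing_matching n M"
  shows "length (LL M) = n" "set (LL M) = fst ` M" "sorted_wrt (<) (LL M)"
  using nm_card[OF NM] nm_finite[OF NM] by (auto simp: LL_def strict_sorted_list_of_set)

lemma opener_LL: "opener M i = LL M ! (i - 1)" by (simp add: opener_def LL_def)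

lemma op_mem: assumes NM: "noncrossing_matching n M" "1 \<le> i" "i \<le> n"
  shows "opener M i \<in> fst ` M"
  using LL_props[OF NM(1)] assms(2,3) nth_mem[of "i-1" "LL M"] by (auto simp: opener_LL)

lemma op_less: assumes NM: "noncrossing_matching n M" "1 \<le> i" "i < j" "j \<le> n"
  shows "opener M i < opener M j"
  using LL_props[OF NM(1)] assms(2,3,4) sorted_wrt_nth_less[of "(<)" "LL M" "i-1" "j-1"]
  by (auto simp: opener_LL)

lemma op_pos: assumes NM: "noncrossing_matching n M" "1 \<le> i" "i \<le> n"
  shows "1 \<le> opener M i \<and> opener M i \<le> 2*n"
  using op_mem[OF assms] nm_arch[OF NM(1)] by force

lemma op_gap: assumes NM: "noncrossing_matching n M"
  shows "1 \<le> i \<Longrightarrow> i \<le> j \<Longrightarrow> j \<le> n \<Longrightarrow> opener M i + (j - i) \<le> opener M j"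
proof (induction j)
  case 0 then show ?case by simp
next
  case (Suc j)
  show ?case
  proof (cases "i = Suc j")
    case True then show ?thesis by simp
  next
    case False
    then have "i \<le> j" using Suc by simp
    then have "opener M i + (j - i) \<le> opener M j" using Suc by simp
    moreover have "opener M j < opener M (Suc j)" using op_less[OF NM, of j "Suc j"] Suc \<open>i \<le> j\<close> by simp
    ultimately show ?thesis using \<open>i \<le> j\<close> by simp
  qed
qed

lemma op_ge: assumes NM: "noncrossing_matching n M" "1 \<le> i" "i \<le> n"
  shows "i \<le> opener M i"
proof -
  have "opener M 1 + (i - 1) \<le> opener M i" using op_gap[OF NM(1), of 1 i] assms by simp
  moreover have "1 \<le> opener M 1" using op_pos[OF NM(1), of 1] assms by simp
  ultimately show ?thesis using assms by linarith
qed

lemma op_img: assumes NM: "noncrossing_matching n M"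
  shows "opener M ` {1..n} = fst ` M" "inj_on (opener M) {1..n}"
proof -
  show "inj_on (opener M) {1..n}"
  proof (rule inj_onI)
    fix i j assume "i\<in>{1..n}" "j\<in>{1..n}" "opener M i = opener M j"
    then show "i = j"
    proof (cases i j rule: linorder_cases)
      case less then show ?thesis using op_less[OF NM, of i j] \<open>i\<in>{1..n}\<close> \<open>j\<in>{1..n}\<close> \<open>opener M i = opener M j\<close> by simp
    next
      case greater then show ?thesis using op_less[OF NM, of j i] \<open>i\<in>{1..n}\<close> \<open>j\<in>{1..n}\<close> \<open>opener M i = opener M j\<close> by simp
    qed simp
  qed
  show "opener M ` {1..n} = fst ` M"
  proof
    show "opener M ` {1..n} \<subseteq> fst ` M" using op_mem[OF NM] by auto
    show "fst ` M \<subseteq> opener M ` {1..n}"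
    proof
      fix x assume "x \<in> fst ` M"
      then have "x \<in> set (LL M)" using LL_props[OF NM] by simp
      then obtain k where k: "k < n" "x = LL M ! k" using LL_props(1)[OF NM] by (metis in_set_conv_nth)
      then have "x = opener M (k+1)" by (simp add: opener_LL)
      moreover have "k + 1 \<in> {1..n}" using k by simp
      ultimately show "x \<in> opener M ` {1..n}" by blast
    qed
  qed
qed

lemma card_op: assumes NM: "noncrossing_matching n M"
  shows "card {i\<in>{1..n}. P (opener M i)} = card {a\<in>M. P (fst a)}"
proof -
  define A where "A = {i\<in>{1..n}. P (opener M i)}"
  define B where "B = {a\<in>M. P (fst a)}"
  have e1: "opener M ` A = {x\<in>fst ` M. P x}"
  proof
    show "opener M ` A \<subseteq> {x\<in>fst ` M. P x}"
    proof
      fix x assume "x \<in> opener M ` A"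
      then obtain i where "i \<in> A" "x = opener M i" by blast
      then have "i \<in> {1..n}" "P (opener M i)" unfolding A_def by auto
      then show "x \<in> {x\<in>fst ` M. P x}" using op_img(1)[OF NM] \<open>x = opener M i\<close> by auto
    qed
    show "{x\<in>fst ` M. P x} \<subseteq> opener M ` A"
    proof
      fix x assume x: "x \<in> {x\<in>fst ` M. P x}"
      then have "x \<in> opener M ` {1..n}" using op_img(1)[OF NM] by simp
      then obtain i where "i \<in> {1..n}" "x = opener M i" by blast
      then have "i \<in> A" using x unfolding A_def by auto
      then show "x \<in> opener M ` A" using \<open>x = opener M i\<close> by blast
    qed
  qed
  have "A \<subseteq> {1..n}" unfolding A_def by auto
  then have i1: "inj_on (opener M) A" using inj_on_subset[OF op_img(2)[OF NM]] by blast
  have e2: "fst ` B = {x\<in>fst ` M. P x}" unfolding B_def by auto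
  have "B \<subseteq> M" unfolding B_def by auto
  then have i2: "inj_on fst B" using inj_on_subset[OF nm_inj_fst[OF NM]] by blast
  have "card A = card {x\<in>fst ` M. P x}" using card_image[OF i1] e1 by simp
  moreover have "card B = card {x\<in>fst ` M. P x}" using card_image[OF i2] e2 by simp
  ultimately show ?thesis unfolding A_def B_def by simp
qed




lemma young_mem: "(x,y) \<in> young n M \<longleftrightarrow> 1 \<le> x \<and> x \<le> n \<and> 1 \<le> y \<and> y \<le> opener M (n + 1 - x) - (n + 1 - x)"
  by (simp add: young_def)

lemma yd_young: assumes NM: "noncrossing_matching n M" shows "yd (young n M)"
proof (rule ydI)
  have "young n M \<subseteq> {1..n} \<times> {0..2*n}"
  proof
    fix b assume "b \<in> young n M"
    moreover obtain x y where b: "b = (x,y)" by (cases b)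
    ultimately have h: "1 \<le> x" "x \<le> n" "y \<le> opener M (n + 1 - x) - (n + 1 - x)" using young_mem by auto
    have "opener M (n + 1 - x) \<le> 2*n" using op_pos[OF NM, of "n+1-x"] h by simp
    then show "b \<in> {1..n} \<times> {0..2*n}" using h b by auto
  qed
  then show "finite (young n M)" using finite_subset by blast
  show "\<And>x y. (x,y)\<in>young n M \<Longrightarrow> 1 \<le> x \<and> 1 \<le> y" using young_mem by blast
  fix x y x' y' assume h: "(x,y)\<in>young n M" "1 \<le> x'" "x' \<le> x" "1 \<le> y'" "y' \<le> y"
  then have h2: "1 \<le> x" "x \<le> n" "y \<le> opener M (n + 1 - x) - (n + 1 - x)" using young_mem by auto
  have "opener M (n+1-x) + ((n+1-x') - (n+1-x)) \<le> opener M (n+1-x')"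
    using op_gap[OF NM, of "n+1-x" "n+1-x'"] h h2 by simp
  then have "y' \<le> opener M (n + 1 - x') - (n + 1 - x')" using h h2 by linarith
  then show "(x',y')\<in>young n M" using young_mem h h2 by auto
qed

lemma dg_young: assumes NM: "noncrossing_matching n M" and d: "- int n \<le> d"
  shows "dg (young n M) d = card {i\<in>{1..n}. int i \<le> int n + d \<and> int n + d < int (opener M i)}"
proof -
  define S where "S = {i\<in>{1..n}. int i \<le> int n + d \<and> int n + d < int (opener M i)}"
  define f where "f = (\<lambda>b::nat\<times>nat. n + 1 - fst b)"
  have inj: "inj_on f (diag (young n M) d)"
  proof (rule inj_onI)
    fix a b assume a: "a \<in> diag (young n M) d" and b: "b \<in> diag (young n M) d" and e: "f a = f b"
    obtain xa ya where xa: "a = (xa,ya)" by (cases a)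
    obtain xb yb where xb: "b = (xb,yb)" by (cases b)
    have "xa \<le> n" "xb \<le> n" using a b xa xb young_mem by (auto simp: diag_def)
    then have "xa = xb" using e xa xb by (simp add: f_def)
    moreover have "int ya - int xa = d" "int yb - int xb = d" using a b xa xb by (auto simp: diag_def)
    ultimately show "a = b" using xa xb by simp
  qed
  have img: "f ` diag (young n M) d = S"
  proof
    show "f ` diag (young n M) d \<subseteq> S"
    proof
      fix i assume "i \<in> f ` diag (young n M) d"
      then obtain x y where b: "(x,y) \<in> young n M" "int y - int x = d" "i = n + 1 - x"
        by (auto simp: diag_def f_def)
      then have h: "1 \<le> x" "x \<le> n" "1 \<le> y" "y \<le> opener M (n + 1 - x) - (n + 1 - x)" using young_mem by auto
      have ge: "n + 1 - x \<le> opener M (n+1-x)" using op_ge[OF NM, of "n+1-x"] h by simp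
      show "i \<in> S" unfolding S_def using h b ge by auto
    qed
    show "S \<subseteq> f ` diag (young n M) d"
    proof
      fix i assume i: "i \<in> S"
      then have h: "1 \<le> i" "i \<le> n" "int i \<le> int n + d" "int n + d < int (opener M i)" by (auto simp: S_def)
      define x where "x = n + 1 - i"
      define y where "y = nat (int x + d)"
      have ge: "i \<le> opener M i" using op_ge[OF NM, of i] h by simp
      have ix: "n + 1 - x = i" using h by (simp add: x_def)
      have xi: "int x = int n + 1 - int i" using h by (simp add: x_def of_nat_diff)
      have y1: "int y = int n + 1 - int i + d" using h xi by (simp add: y_def)
      have oi: "int (opener M i - i) = int (opener M i) - int i" using ge by (simp add: of_nat_diff)
      have "1 \<le> y" using y1 h by linarith
      moreover have "int y \<le> int (opener M i - i)" using y1 oi h by linarith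
      moreover have "1 \<le> x" "x \<le> n" using h by (auto simp: x_def)
      ultimately have "(x,y) \<in> young n M" unfolding young_mem ix by simp
      moreover have "int y - int x = d" using y1 xi by simp
      ultimately have "(x,y) \<in> diag (young n M) d" by (simp add: diag_def)
      moreover have "f (x,y) = i" using h by (simp add: f_def x_def)
      ultimately show "i \<in> f ` diag (young n M) d" by force
    qed
  qed
  show ?thesis unfolding dg_def using card_image[OF inj] img by (simp add: S_def)
qed




definition hh :: "(nat \<times> nat) set \<Rightarrow> nat \<Rightarrow> nat" where
  "hh M t = card {a\<in>M. fst a \<le> t \<and> t < snd a}"
definition gg :: "(nat \<times> nat) set \<Rightarrow> nat \<Rightarrow> nat" where
  "gg M t = card {a\<in>M. fst a \<le> t}"

lemma card_proj: assumes "inj_on f M" "finite M"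
  shows "card {a\<in>M. P (f a)} = card {x\<in>f ` M. P x}"
proof -
  have "f ` {a\<in>M. P (f a)} = {x\<in>f ` M. P x}" by auto
  moreover have "inj_on f {a\<in>M. P (f a)}" using inj_on_subset[OF assms(1)] by auto
  ultimately show ?thesis using card_image by metis
qed

lemma hh_eq: assumes NM: "noncrossing_matching n M" and t: "t \<le> 2*n"
  shows "int (hh M t) = 2 * int (gg M t) - int t"
proof -
  have fin: "finite M" using nm_finite[OF NM] .
  define S where "S = {a\<in>M. snd a \<le> t}"
  have lt: "\<And>a. a \<in> M \<Longrightarrow> fst a < snd a"
  proof -
    fix a assume "a \<in> M" moreover obtain i j where "a = (i,j)" by (cases a)
    ultimately show "fst a < snd a" using nm_arch[OF NM, of i j] by simp
  qed
  have u: "{a\<in>M. fst a \<le> t} = {a\<in>M. fst a \<le> t \<and> t < snd a} \<union> S" using lt unfolding S_def by force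
  have dj: "{a\<in>M. fst a \<le> t \<and> t < snd a} \<inter> S = {}" unfolding S_def by auto
  have 1: "gg M t = hh M t + card S" unfolding gg_def hh_def u
    using card_Un_disjoint[OF _ _ dj] fin unfolding S_def by simp
  have c1: "gg M t = card {x\<in>fst ` M. x \<le> t}" unfolding gg_def using card_proj[OF nm_inj_fst[OF NM] fin] .
  have c2: "card S = card {x\<in>snd ` M. x \<le> t}" unfolding S_def using card_proj[OF nm_inj_snd[OF NM] fin] .
  have "{x\<in>fst ` M. x \<le> t} \<union> {x\<in>snd ` M. x \<le> t} = {x \<in> fst ` M \<union> snd ` M. x \<le> t}" by blast
  also have "\<dots> = {x \<in> {1..2*n}. x \<le> t}" using nm_union[OF NM] by simp
  also have "\<dots> = {1..t}" using t by auto
  finally have "{x\<in>fst ` M. x \<le> t} \<union> {x\<in>snd ` M. x \<le> t} = {1..t}" .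
  moreover have "{x\<in>fst ` M. x \<le> t} \<inter> {x\<in>snd ` M. x \<le> t} = {}" using nm_disj[OF NM] by auto
  moreover have "finite {x\<in>fst ` M. x \<le> t}" "finite {x\<in>snd ` M. x \<le> t}" using fin by auto
  ultimately have "card {x\<in>fst ` M. x \<le> t} + card {x\<in>snd ` M. x \<le> t} = card {1..t}"
    using card_Un_disjoint[of "{x\<in>fst ` M. x \<le> t}" "{x\<in>snd ` M. x \<le> t}"] by simp
  then have "card {x\<in>fst ` M. x \<le> t} + card {x\<in>snd ` M. x \<le> t} = t" by simp
  then show ?thesis using 1 c1 c2 by simp
qed

lemma Hh_young: assumes NM: "noncrossing_matching n M" and d: "- int n \<le> d" "d \<le> int n"
  shows "Hh n (young n M) d = int (hh M (nat (int n + d)))"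
proof -
  define t where "t = nat (int n + d)"
  have tt: "int t = int n + d" using d by (simp add: t_def)
  have dgy: "dg (young n M) d = card {i\<in>{1..n}. i \<le> t \<and> t < opener M i}"
  proof -
    have "{i\<in>{1..n}. int i \<le> int n + d \<and> int n + d < int (opener M i)} = {i\<in>{1..n}. i \<le> t \<and> t < opener M i}"
      using tt by (metis (no_types, lifting) of_nat_le_iff of_nat_less_iff)
    then show ?thesis using dg_young[OF NM d(1)] by simp
  qed
  have g: "card {i\<in>{1..n}. opener M i \<le> t} = gg M t" unfolding gg_def using card_op[OF NM] .
  have u: "{i\<in>{1..n}. i \<le> t} = {i\<in>{1..n}. i \<le> t \<and> t < opener M i} \<union> {i\<in>{1..n}. opener M i \<le> t}"
    using op_ge[OF NM] by force
  have dj: "{i\<in>{1..n}. i \<le> t \<and> t < opener M i} \<inter> {i\<in>{1..n}. opener M i \<le> t} = {}" by auto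
  have "card {i\<in>{1..n}. i \<le> t} = dg (young n M) d + gg M t"
    unfolding dgy g[symmetric] u using card_Un_disjoint[OF _ _ dj] by simp
  moreover have "{i\<in>{1..n}. i \<le> t} = {1..min n t}" by auto
  ultimately have e: "min n t = dg (young n M) d + gg M t" by simp
  have "t \<le> 2*n" using tt d by linarith
  then have "int (hh M t) = 2 * int (gg M t) - int t" using hh_eq[OF NM] by blast
  then show ?thesis unfolding Hh_def t_def[symmetric] using e tt by (simp add: min_def split: if_splits)
qed




lemma arcsL_mem: "a \<in> arcsL n M p \<longleftrightarrow> a \<in> M \<and> fst a \<le> p \<and> p < snd a \<and> snd a < hat n p"
  by (cases a) (auto simp: arcsL_def)
lemma arcsR_mem: "a \<in> arcsR n M p \<longleftrightarrow> a \<in> M \<and> p < fst a \<and> fst a < hat n p \<and> hat n p \<le> snd a"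
  by (cases a) (auto simp: arcsR_def)

lemma mA_eq: assumes NM: "noncrossing_matching n M" and p1: "1 \<le> p" and pn: "p \<le> n - 1"
  shows "int (mA n M p) = Fv n (young n M) (int n - int p)"
proof -
  define q where "q = int n - int p"
  define L where "L = arcsL n M p"
  define R where "R = arcsR n M p"
  define C where "C = {a\<in>M. fst a \<le> p \<and> hat n p \<le> snd a}"
  have fin: "finite M" using nm_finite[OF NM] .
  have hat: "hat n p = 2*n + 1 - p" by (simp add: hat_def)
  have q1: "1 \<le> q" using pn p1 by (simp add: q_def)
  have "L \<subseteq> M" "R \<subseteq> M" by (auto simp: L_def R_def arcsL_mem arcsR_mem)
  then have finL: "finite L" "finite R" "finite C" using fin finite_subset by (auto simp: C_def)
  have s1: "{a\<in>M. fst a \<le> p \<and> p < snd a} = L \<union> C" "L \<inter> C = {}"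
    using pn by (auto simp: L_def C_def arcsL_mem hat)
  have h1: "hh M p = card L + card C" unfolding hh_def s1(1) using card_Un_disjoint[OF finL(1) finL(3) s1(2)] .
  have s2: "{a\<in>M. fst a \<le> 2*n - p \<and> 2*n - p < snd a} = R \<union> C" "R \<inter> C = {}"
    using pn by (auto simp: R_def C_def arcsR_mem hat)
  have h2: "hh M (2*n - p) = card R + card C" unfolding hh_def s2(1) using card_Un_disjoint[OF finL(2) finL(3) s2(2)] .
  have Hd: "\<And>d. d \<in> {-q..q} \<Longrightarrow> Hh n (young n M) d = int (hh M (nat (int n + d)))"
    using Hh_young[OF NM] q1 by (simp add: q_def)
  have lower: "\<And>t. p \<le> t \<Longrightarrow> t \<le> 2*n - p \<Longrightarrow> card C \<le> hh M t"
  proof -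
    fix t assume t: "p \<le> t" "t \<le> 2*n - p"
    have "C \<subseteq> {a\<in>M. fst a \<le> t \<and> t < snd a}" using t pn by (auto simp: C_def hat)
    moreover have "finite {a\<in>M. fst a \<le> t \<and> t < snd a}" using fin by simp
    ultimately show "card C \<le> hh M t" unfolding hh_def by (rule card_mono[rotated])
  qed
  have att: "\<exists>t. p \<le> t \<and> t \<le> 2*n - p \<and> hh M t = card C"
  proof (cases "L = {}")
    case True then show ?thesis using h1 pn by (intro exI[of _ p]) simp
  next
    case False
    define t0 where "t0 = Max (snd ` L)"
    have "t0 \<in> snd ` L" unfolding t0_def using False finL by simp
    then obtain a0 where a0: "a0 \<in> L" "snd a0 = t0" by auto
    have a0': "a0 \<in> M" "fst a0 \<le> p" "p < t0" "t0 < hat n p" using a0 by (auto simp: L_def arcsL_mem)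
    have sub: "{a\<in>M. fst a \<le> t0 \<and> t0 < snd a} \<subseteq> C"
    proof
      fix b assume b: "b \<in> {a\<in>M. fst a \<le> t0 \<and> t0 < snd a}"
      then have bM: "b \<in> M" "fst b \<le> t0" "t0 < snd b" by auto
      have "fst b \<noteq> t0" using nm_disj[OF NM] a0'(1) a0(2) bM(1) by (metis disjoint_iff image_eqI)
      then have fb: "fst b < t0" using bM by simp
      have "fst b \<le> p"
      proof (rule ccontr)
        assume "\<not> fst b \<le> p"
        then have "fst a0 < fst b \<and> fst b < t0 \<and> t0 < snd b" using a0' fb bM by linarith
        moreover have "(fst a0, t0) \<in> M" "(fst b, snd b) \<in> M" using a0'(1) a0(2) bM(1) by (metis prod.collapse)+
        ultimately show False using nm_nc[OF NM] by blast
      qed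
      moreover have "hat n p \<le> snd b"
      proof (rule ccontr)
        assume "\<not> hat n p \<le> snd b"
        then have "b \<in> L" using bM \<open>fst b \<le> p\<close> a0' by (auto simp: L_def arcsL_mem)
        then have "snd b \<le> t0" unfolding t0_def using finL by simp
        then show False using bM by simp
      qed
      ultimately show "b \<in> C" using bM by (simp add: C_def)
    qed
    have "hh M t0 \<le> card C" unfolding hh_def using card_mono[OF finL(3) sub] .
    moreover have "t0 \<le> 2*n - p" using a0' hat by simp
    moreover have "p \<le> t0" using a0' by simp
    ultimately show ?thesis using lower by (intro exI[of _ t0]) (auto intro: antisym)
  qed
  have minW: "Min (Hh n (young n M) ` {-q..q}) = int (card C)"
  proof (rule Min_eqI)
    show "finite (Hh n (young n M) ` {-q..q})" by simp
    show "\<And>y. y \<in> Hh n (young n M) ` {-q..q} \<Longrightarrow> int (card C) \<le> y"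
    proof -
      fix y assume "y \<in> Hh n (young n M) ` {-q..q}"
      then obtain d where d: "d \<in> {-q..q}" "y = Hh n (young n M) d" by blast
      have "p \<le> nat (int n + d)" "nat (int n + d) \<le> 2*n - p" using d pn by (auto simp: q_def)
      then have "card C \<le> hh M (nat (int n + d))" using lower by blast
      then show "int (card C) \<le> y" using d Hd by simp
    qed
    show "int (card C) \<in> Hh n (young n M) ` {-q..q}"
    proof -
      obtain t where t: "p \<le> t" "t \<le> 2*n - p" "hh M t = card C" using att by blast
      define d where "d = int t - int n"
      have "d \<in> {-q..q}" using t pn by (auto simp: d_def q_def)
      moreover have "nat (int n + d) = t" by (simp add: d_def)
      ultimately have "Hh n (young n M) d = int (card C)" using Hd t by simp
      then show ?thesis using \<open>d \<in> {-q..q}\<close> by force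
    qed
  qed
  have e1: "Hh n (young n M) (-q) = int (hh M p)" using Hd[of "-q"] q1 by (simp add: q_def)
  have e2: "Hh n (young n M) q = int (hh M (2*n - p))" using Hd[of q] q1 pn
    by (simp add: q_def) (metis (no_types, opaque_lifting) add_diff_cancel_left' mult_2 nat_int of_nat_add of_nat_diff le_add2 order_trans pn diff_le_self)
  have f1: "Hh n (young n M) (-q) = int n - q - 2 * int (dg (young n M) (-q))"
    "Hh n (young n M) q = int n - q - 2 * int (dg (young n M) q)" using q1 by (simp_all add: Hh_def)
  have f2: "Fv n (young n M) q = int n - q - int (dg (young n M) (-q)) - int (dg (young n M) q) - int (card C)"
    unfolding Fv_def minW by simp
  have "2 * Fv n (young n M) q = int (card L) + int (card R)"
    using e1 e2 h1 h2 f1 f2 by linarith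
  moreover have "mA n M p = (card L + card R) div 2" by (simp add: mA_def L_def R_def)
  ultimately show ?thesis unfolding q_def by linarith
qed

theorem theorem3p2:
  fixes n p :: nat and M :: "(nat \<times> nat) set"
  assumes "noncrossing_matching n M" and "1 \<le> p" and "p \<le> n - 1"
  shows "mA n M p = mB n M p"
proof -
  define q where "q = int n - int p"
  have q1: "1 \<le> q" using assms by (simp add: q_def)
  have Y: "yd (young n M)" using yd_young[OF assms(1)] .
  have "B_pi n M = Sg n (young n M) (card (young n M))" by (simp add: B_pi_def Sg_def)
  moreover have "int p = int n - q" by (simp add: q_def)
  ultimately have "int (mB n M p) = int (count (Sg n (young n M) (card (young n M))) (int n - q))"
    by (simp add: mB_def)
  also have "\<dots> = Fv n (young n M) q" using main_ind[OF q1 Y] by simp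
  also have "\<dots> = int (mA n M p)" using mA_eq[OF assms] by (simp add: q_def)
  finally show ?thesis by simp
qed


end
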